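(* Let $(V,\mu)$ be an infinite, connected, locally finite weighted graph and let $\Omega\subset V$ be a connected subset. Assume that either $\Omega\neq V$ or $(V,\mu)$ is non-parabolic. Let $\sigma\in\ell^+(\Omega)$, $\sigma\not\equiv 0$, and let $1<q<\infty$. Then the following are equivalent: (I) the Dirichlet problem $-\Delta u\ge \sigma u^q$ in $\Omega$, $u=0$ on $\partial\Omega$ (when $\Omega=V$: simply $-\Delta u\ge\sigma u^q$ in $V$) admits a positive solution, i.e. a function $u$ with $u(x)>0$ for all $x\in\Omega$; (II) the integral inequality $u(x)\ge G_\Omega(\sigma u^q)(x)$ for all $x\in\Omega$ admits a positive solution $u$ on $\Omega$; (III) for some, equivalently for all, $o\in\Omega$ with $\sigma(o)>0$, there is a constant $C>0$ such that for all $x\in\Omega$, $$G_\Omega\big(\sigma\, g_\Omega(o,\cdot)^q\big)(x)\le C\, g_\Omega(o,x)<\infty .$$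
   Context: A weighted graph $(V,E,\mu)$: $V$ is a countable vertex set, $\mu:V\times V\to[0,\infty)$ is symmetric, $\mu_{xy}>0$ iff $x\sim y$ (i.e. $\{x,y\}\in E$); locally finite means each vertex has finitely many neighbours; $\mu(x)=\sum_{y\sim x}\mu_{xy}$. The Laplacian is $\Delta u(x)=\frac{1}{\mu(x)}\sum_{y\sim x}\mu_{xy}(u(y)-u(x))$. $\ell(\Omega)$ denotes real functions on $\Omega$, $\ell^+(\Omega)$ nonnegative ones; functions on $\Omega$ are extended by zero outside $\Omega$. $\partial\Omega=\{y\in V\setminus\Omega:\ \exists x\in\Omega,\ x\sim y\}$. The random walk $(X_n)$ has transition probabilities $P(x,y)=\mu_{xy}/\mu(x)$; $\tau_\Omega=\min\{n\ge0: X_n\notin\Omega\}$; $P^\Omega_n(x,y)=\mathbb P_x[X_n=y,\ n<\tau_\Omega]$. The Dirichlet Green function is $g_\Omega(x,y)=\sum_{n\ge0}P_n^\Omega(x,y)/\mu(y)$ for $x,y\in\Omega$ (symmetric), $g=g_V$, and the Green operator is $G_\Omega f(x)=\sum_{y\in\Omega}g_\Omega(x,y)f(y)\mu(y)$. The graph is parabolic if every nonnegative superharmonic function is constant, and non-parabolic otherwise (equivalently $g(x,y)<\infty$). Under the stated assumptions $g_\Omega(x,y)<\infty$ for all $x,y\in\Omega$. *)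

theory Defs
  imports "HOL-Analysis.Analysis"
begin

definition nbrs :: "('a \<Rightarrow> 'a \<Rightarrow> real) \<Rightarrow> 'a \<Rightarrow> 'a set" where
  "nbrs mu x = {y. mu x y > 0}"

definition weighted_graph :: "('a \<Rightarrow> 'a \<Rightarrow> real) \<Rightarrow> bool" where
  "weighted_graph mu \<longleftrightarrow> (\<forall>x y. mu x y = mu y x) \<and> (\<forall>x y. 0 \<le> mu x y)"

definition locally_finite :: "('a \<Rightarrow> 'a \<Rightarrow> real) \<Rightarrow> bool" where
  "locally_finite mu \<longleftrightarrow> (\<forall>x. finite (nbrs mu x))"

definition graph_connected :: "('a \<Rightarrow> 'a \<Rightarrow> real) \<Rightarrow> bool" where
  "graph_connected mu \<longleftrightarrow> (\<forall>x y. (x, y) \<in> {(a, b). mu a b > 0}\<^sup>*)"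

definition connected_subset :: "('a \<Rightarrow> 'a \<Rightarrow> real) \<Rightarrow> 'a set \<Rightarrow> bool" where
  "connected_subset mu \<Omega> \<longleftrightarrow>
     (\<forall>x\<in>\<Omega>. \<forall>y\<in>\<Omega>. (x, y) \<in> {(a, b). a \<in> \<Omega> \<and> b \<in> \<Omega> \<and> mu a b > 0}\<^sup>*)"

definition vmeasure :: "('a \<Rightarrow> 'a \<Rightarrow> real) \<Rightarrow> 'a \<Rightarrow> real" where
  "vmeasure mu x = (\<Sum>y\<in>nbrs mu x. mu x y)"

definition laplacian :: "('a \<Rightarrow> 'a \<Rightarrow> real) \<Rightarrow> ('a \<Rightarrow> real) \<Rightarrow> 'a \<Rightarrow> real" where
  "laplacian mu u x = (1 / vmeasure mu x) * (\<Sum>y\<in>nbrs mu x. mu x y * (u y - u x))"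

definition superharmonic :: "('a \<Rightarrow> 'a \<Rightarrow> real) \<Rightarrow> ('a \<Rightarrow> real) \<Rightarrow> bool" where
  "superharmonic mu u \<longleftrightarrow> (\<forall>x. laplacian mu u x \<le> 0)"

definition parabolic :: "('a \<Rightarrow> 'a \<Rightarrow> real) \<Rightarrow> bool" where
  "parabolic mu \<longleftrightarrow>
     (\<forall>u. (\<forall>x. 0 \<le> u x) \<and> superharmonic mu u \<longrightarrow> (\<exists>c. \<forall>x. u x = c))"

definition trans_prob :: "('a \<Rightarrow> 'a \<Rightarrow> real) \<Rightarrow> 'a \<Rightarrow> 'a \<Rightarrow> real" where
  "trans_prob mu x y = mu x y / vmeasure mu x"

text \<open>Killed transition probabilities
  P^\<Omega>_n(x,y) = P_x[X_n = y, n < tau_\<Omega>], i.e. the total probability of walks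
  x = x_0, ..., x_n = y all of whose points lie in \<Omega>.\<close>
fun killed_prob :: "('a \<Rightarrow> 'a \<Rightarrow> real) \<Rightarrow> 'a set \<Rightarrow> nat \<Rightarrow> 'a \<Rightarrow> 'a \<Rightarrow> real" where
  "killed_prob mu \<Omega> 0 x y = (if x \<in> \<Omega> \<and> x = y then 1 else 0)"
| "killed_prob mu \<Omega> (Suc n) x y =
     (if x \<in> \<Omega> then (\<Sum>z\<in>nbrs mu x. trans_prob mu x z * killed_prob mu \<Omega> n z y) else 0)"

definition green :: "('a \<Rightarrow> 'a \<Rightarrow> real) \<Rightarrow> 'a set \<Rightarrow> 'a \<Rightarrow> 'a \<Rightarrow> ennreal" where
  "green mu \<Omega> x y = (\<Sum>n. ennreal (killed_prob mu \<Omega> n x y)) / ennreal (vmeasure mu y)"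

definition green_op :: "('a \<Rightarrow> 'a \<Rightarrow> real) \<Rightarrow> 'a set \<Rightarrow> ('a \<Rightarrow> ennreal) \<Rightarrow> 'a \<Rightarrow> ennreal" where
  "green_op mu \<Omega> f x = (\<Sum>\<^sub>\<infinity>y\<in>\<Omega>. green mu \<Omega> x y * f y * ennreal (vmeasure mu y))"

definition epowr :: "ennreal \<Rightarrow> real \<Rightarrow> ennreal" where
  "epowr t q = (if t = \<infinity> then \<infinity> else ennreal (enn2real t powr q))"

end

theory Submission
  imports Defs
begin

lemma ens[simp]: "(f::_ \<Rightarrow> ennreal) summable_on S" by (simp add: nonneg_summable_on_complete)



lemma powr_convex_neg: 
  assumes "p \<le> 0" shows "convex_on {0<..} (\<lambda>x::real. x powr p)"
proof (rule f''_ge0_imp_convex[where f' = "\<lambda>x. p * x powr (p - 1)" and f'' = "\<lambda>x. p * ((p - 1) * x powr (p - 1 - 1))"])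
  show "convex {0::real<..}" by simp
  fix x :: real assume x: "x \<in> {0<..}"
  show "DERIV (\<lambda>x. x powr p) x :> p * x powr (p - 1)" using x
    by (auto intro!: derivative_eq_intros)
  show "DERIV (\<lambda>x. p * x powr (p - 1)) x :> p * ((p - 1) * x powr (p - 1 - 1))" using x
    by (auto intro!: derivative_eq_intros)
  have "(p - 1) * x powr (p - 1 - 1) \<le> 0" using x assms
    by (simp add: mult_nonpos_nonneg)
  then show "0 \<le> p * ((p - 1) * x powr (p - 1 - 1))" using assms
    by (simp add: mult_nonpos_nonpos)
qed

lemma powr_tangent:
  fixes s t p :: real
  assumes "p \<le> 0" "0 < s" "0 < t"
  shows "s powr p - t powr p \<ge> p * t powr (p - 1) * (s - t)"
proof -
  have i: "interior {0::real<..} = {0<..}" by (simp add: interior_open)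
  have d: "((\<lambda>x. x powr p) has_field_derivative p * t powr (p - 1)) (at t within {0<..})"
    using assms(3) by (auto intro!: derivative_eq_intros)
  have c: "connected {0::real<..}" by (simp add: is_interval_connected)
  show ?thesis
    by (rule convex_on_imp_above_tangent[OF powr_convex_neg[OF assms(1)] c _ _ d]) (use assms i in auto)
qed

lemma aux_div: fixes A B D c :: real shows "0 < c \<Longrightarrow> - D * c \<le> A - B \<Longrightarrow> - (A / c) \<le> - (B / c) + D"
  by (simp add: field_simps)

lemma aux_phi: fixes V W q :: real shows "1 < q \<Longrightarrow> V \<le> W \<Longrightarrow> V \<le> W * q / (q - 1) - V / (q - 1)"
proof -
  assume q: "1 < q" and VW: "V \<le> W"
  have e: "W * q / (q - 1) - V / (q - 1) = (W * q - V) / (q - 1)" by (simp add: diff_divide_distrib)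
  have "V * q \<le> W * q" using VW q by (intro mult_right_mono) auto
  then have "V * (q - 1) \<le> W * q - V" by (simp add: algebra_simps)
  then show ?thesis unfolding e using q by (simp add: pos_le_divide_eq)
qed

lemma tangent_term:
  fixes q K hz vx uz :: real
  assumes q: "1 < q" and hz: "0 < hz" and vx: "0 < vx" and uz: "0 < uz"
  shows "hz * (K - (uz / hz) powr (1 - q) / (q - 1))
           \<le> hz * (K - vx powr (1 - q) / (q - 1)) + vx powr (- q) * (uz - vx * hz)"
proof -
  define s where "s = uz / hz"
  have s: "0 < s" using hz uz by (simp add: s_def)
  have t: "(1 - q) * vx powr (1 - q - 1) * (s - vx) \<le> s powr (1 - q) - vx powr (1 - q)"
    using powr_tangent[of "1 - q" s vx] q s vx by simp
  have e: "1 - q - 1 = - q" by simp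
  have t2: "- (vx powr (- q) * (s - vx)) * (q - 1) \<le> s powr (1 - q) - vx powr (1 - q)"
    using t unfolding e by (simp add: algebra_simps)
  have t3: "- (s powr (1 - q) / (q - 1)) \<le> - (vx powr (1 - q) / (q - 1)) + vx powr (- q) * (s - vx)"
    using aux_div[OF _ t2] q by simp
  have "hz * (K - s powr (1 - q) / (q - 1)) \<le> hz * (K - vx powr (1 - q) / (q - 1) + vx powr (- q) * (s - vx))"
    using t3 hz by (intro mult_left_mono) auto
  also have "\<dots> = hz * (K - vx powr (1 - q) / (q - 1)) + vx powr (- q) * (hz * s - vx * hz)"
    by (simp add: algebra_simps)
  also have "hz * s = uz" using hz by (simp add: s_def)
  finally show ?thesis by (simp add: s_def)
qed

lemma powr_ratio:
  fixes h u q :: real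
  assumes "0 < h" "0 < u"
  shows "(u / h) powr (- q) * u powr q = h powr q"
proof -
  have "(u / h) powr (- q) = (h / u) powr q"
    using assms by (simp add: powr_minus powr_divide field_simps)
  also have "(h / u) powr q * u powr q = (h / u * u) powr q"
    using assms by (subst powr_mult) auto
  also have "h / u * u = h" using assms by simp
  finally show ?thesis .
qed

lemma phi_lower:
  fixes q a v :: real
  assumes q: "1 < q" and a: "0 < a" and v: "a \<le> v"
  shows "v powr (1 - q) \<le> a powr (1 - q) * q / (q - 1) - v powr (1 - q) / (q - 1)"
proof -
  have "v powr (1 - q) \<le> a powr (1 - q)"
    using q a v by (intro powr_mono2') auto
  then show ?thesis using q by (rule aux_phi[rotated])
qed


locale wgraph =
  fixes mu :: "'a \<Rightarrow> 'a \<Rightarrow> real" and \<Omega> :: "'a set"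
  assumes wg: "weighted_graph mu" and lf: "locally_finite mu" and vpos: "\<And>x. vmeasure mu x > 0"
begin

lemma mu_sym: "mu x y = mu y x" using wg by (simp add: weighted_graph_def)
lemma mu_nonneg: "0 \<le> mu x y" using wg by (simp add: weighted_graph_def)
lemma nbrs_sym: "y \<in> nbrs mu x \<longleftrightarrow> x \<in> nbrs mu y" by (simp add: nbrs_def mu_sym)
lemma fin[simp]: "finite (nbrs mu x)" using lf by (simp add: locally_finite_def)
lemma tp_nonneg: "0 \<le> trans_prob mu x y"
  using mu_nonneg[of x y] vpos[of x] by (simp add: trans_prob_def)
lemma tp_sum: "(\<Sum>z\<in>nbrs mu x. trans_prob mu x z) = 1"
  using vpos[of x] by (simp add: trans_prob_def sum_divide_distrib[symmetric] vmeasure_def)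
lemma vm_tp: "vmeasure mu x * trans_prob mu x z = mu x z"
  using vpos[of x] by (simp add: trans_prob_def)

lemma vm_ne0[simp]: "vmeasure mu x \<noteq> 0" using vpos[of x] by simp

lemma sum_if_eq: "finite S \<Longrightarrow> (\<Sum>z\<in>S. if P z \<and> z = y then c z else 0) = (if y \<in> S \<and> P y then c y else (0::'b::comm_monoid_add))"
proof -
  assume "finite S"
  have "(\<Sum>z\<in>S. if P z \<and> z = y then c z else 0) = (\<Sum>z\<in>S. if z = y then (if P y then c y else 0) else 0)"
    by (rule sum.cong) auto
  also have "\<dots> = (if y \<in> S \<and> P y then c y else 0)" using \<open>finite S\<close> by (simp add: sum.delta')
  finally show ?thesis .
qed

lemma kp_nonneg: "0 \<le> killed_prob mu \<Omega> n x y"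
  by (induction n arbitrary: x) (auto intro!: sum_nonneg mult_nonneg_nonneg tp_nonneg)

lemma kp_out1: "x \<notin> \<Omega> \<Longrightarrow> killed_prob mu \<Omega> n x y = 0"
  by (cases n) auto

lemma kp_out2: "y \<notin> \<Omega> \<Longrightarrow> killed_prob mu \<Omega> n x y = 0"
  by (induction n arbitrary: x) auto

lemma kp_last: "killed_prob mu \<Omega> (Suc n) x y =
   (if y \<in> \<Omega> then (\<Sum>z\<in>nbrs mu y. killed_prob mu \<Omega> n x z * trans_prob mu z y) else 0)"
proof (induction n arbitrary: x)
  case 0
  have "killed_prob mu \<Omega> (Suc 0) x y = (if x \<in> \<Omega> \<and> y \<in> \<Omega> \<and> y \<in> nbrs mu x then trans_prob mu x y else 0)"
    by (auto simp: if_distrib sum_if_eq cong: if_cong)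
  also have "\<dots> = (if y \<in> \<Omega> then (\<Sum>z\<in>nbrs mu y. if x \<in> \<Omega> \<and> z = x then trans_prob mu z y else 0) else 0)"
    by (simp add: sum_if_eq[of _ "\<lambda>z. x \<in> \<Omega>"] nbrs_sym)
  also have "\<dots> = (if y \<in> \<Omega> then (\<Sum>z\<in>nbrs mu y. killed_prob mu \<Omega> 0 x z * trans_prob mu z y) else 0)"
    by (auto intro!: sum.cong)
  finally show ?case .
next
  case (Suc n)
  show ?case
  proof (cases "x \<in> \<Omega> \<and> y \<in> \<Omega>")
    case True
    have "killed_prob mu \<Omega> (Suc (Suc n)) x y =
      (\<Sum>z\<in>nbrs mu x. trans_prob mu x z * (\<Sum>w\<in>nbrs mu y. killed_prob mu \<Omega> n z w * trans_prob mu w y))"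
    proof -
      have "killed_prob mu \<Omega> (Suc (Suc n)) x y = (\<Sum>z\<in>nbrs mu x. trans_prob mu x z * killed_prob mu \<Omega> (Suc n) z y)"
        using True by (simp only: killed_prob.simps(2)[of mu \<Omega> "Suc n" x y] if_True)
      also have "\<dots> = (\<Sum>z\<in>nbrs mu x. trans_prob mu x z * (\<Sum>w\<in>nbrs mu y. killed_prob mu \<Omega> n z w * trans_prob mu w y))"
        using True by (simp only: Suc.IH if_True)
      finally show ?thesis .
    qed
    also have "\<dots> = (\<Sum>w\<in>nbrs mu y. (\<Sum>z\<in>nbrs mu x. trans_prob mu x z * killed_prob mu \<Omega> n z w) * trans_prob mu w y)"
      by (simp add: sum_distrib_left sum_distrib_right mult.assoc sum.swap[of _ "nbrs mu x"])
    also have "\<dots> = (\<Sum>w\<in>nbrs mu y. killed_prob mu \<Omega> (Suc n) x w * trans_prob mu w y)"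
      using True by simp
    finally show ?thesis using True by simp
  next
    case False
    then show ?thesis by (auto simp: kp_out1 kp_out2 simp del: killed_prob.simps)
  qed
qed

lemma kp_rev: "vmeasure mu x * killed_prob mu \<Omega> n x y = vmeasure mu y * killed_prob mu \<Omega> n y x"
proof (induction n arbitrary: x y)
  case 0
  then show ?case by auto
next
  case (Suc n)
  show ?case
  proof (cases "x \<in> \<Omega>")
    case True
    have "vmeasure mu x * killed_prob mu \<Omega> (Suc n) x y
        = (\<Sum>z\<in>nbrs mu x. (vmeasure mu x * trans_prob mu x z) * killed_prob mu \<Omega> n z y)"
      using True by (simp add: sum_distrib_left mult.assoc)
    also have "\<dots> = (\<Sum>z\<in>nbrs mu x. mu z x / vmeasure mu z * (vmeasure mu z * killed_prob mu \<Omega> n z y))"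
      by (simp add: vm_tp mu_sym)
    also have "\<dots> = (\<Sum>z\<in>nbrs mu x. trans_prob mu z x * (vmeasure mu y * killed_prob mu \<Omega> n y z))"
      by (simp add: Suc.IH trans_prob_def)
    also have "\<dots> = vmeasure mu y * (\<Sum>z\<in>nbrs mu x. killed_prob mu \<Omega> n y z * trans_prob mu z x)"
      by (simp add: sum_distrib_left algebra_simps)
    also have "\<dots> = vmeasure mu y * killed_prob mu \<Omega> (Suc n) y x"
      using True by (simp only: kp_last) simp
    finally show ?thesis .
  next
    case False
    then show ?thesis by (simp add: kp_out1 kp_last del: killed_prob.simps)
  qed
qed


lemma green_alt: "green mu \<Omega> x y = (\<Sum>n. ennreal (killed_prob mu \<Omega> n x y / vmeasure mu y))"
  unfolding green_def
  by (simp add: ennreal_suminf_divide[symmetric] divide_ennreal kp_nonneg vpos)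

lemma green_sym: "green mu \<Omega> x y = green mu \<Omega> y x"
proof -
  have "killed_prob mu \<Omega> n x y / vmeasure mu y = killed_prob mu \<Omega> n y x / vmeasure mu x" for n
    using kp_rev[of x n y] vpos[of x] vpos[of y]
    by (simp add: field_simps)
  then show ?thesis by (simp add: green_alt)
qed

lemma green_out: "x \<notin> \<Omega> \<or> y \<notin> \<Omega> \<Longrightarrow> green mu \<Omega> x y = 0"
  by (auto simp: green_alt kp_out1 kp_out2 simp del: killed_prob.simps)

lemma kp_pos:
  assumes "(x, y) \<in> {(a, b). a \<in> \<Omega> \<and> b \<in> \<Omega> \<and> mu a b > 0}\<^sup>*" "y \<in> \<Omega>"
  shows "\<exists>n. killed_prob mu \<Omega> n x y > 0"
  using assms(1)
proof (induction rule: converse_rtrancl_induct)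
  case base
  then show ?case using assms(2) by (intro exI[of _ 0]) simp
next
  case (step x z)
  then obtain n where n: "killed_prob mu \<Omega> n z y > 0" by blast
  from step.hyps have xz: "x \<in> \<Omega>" "z \<in> nbrs mu x" "mu x z > 0" by (auto simp: nbrs_def)
  have "0 < trans_prob mu x z * killed_prob mu \<Omega> n z y"
    using xz n vpos[of x] by (simp add: trans_prob_def)
  also have "\<dots> \<le> (\<Sum>w\<in>nbrs mu x. trans_prob mu x w * killed_prob mu \<Omega> n w y)"
    by (rule member_le_sum) (auto intro!: mult_nonneg_nonneg tp_nonneg kp_nonneg xz)
  also have "\<dots> = killed_prob mu \<Omega> (Suc n) x y" using xz by simp
  finally show ?case by blast
qed

lemma green_pos:
  assumes "connected_subset mu \<Omega>" "x \<in> \<Omega>" "y \<in> \<Omega>"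
  shows "green mu \<Omega> x y > 0"
proof -
  obtain n where n: "killed_prob mu \<Omega> n x y > 0"
    using kp_pos[of x y] assms by (auto simp: connected_subset_def)
  have "0 < ennreal (killed_prob mu \<Omega> n x y / vmeasure mu y)"
    using n vpos[of y] by simp
  also have "\<dots> \<le> (\<Sum>n. ennreal (killed_prob mu \<Omega> n x y / vmeasure mu y))"
    using sum_le_suminf[OF summableI, of "{n}" "\<lambda>n. ennreal (killed_prob mu \<Omega> n x y / vmeasure mu y)"]
    by simp
  finally show ?thesis by (simp add: green_alt)
qed

end

definition Qop :: "('a \<Rightarrow> 'a \<Rightarrow> real) \<Rightarrow> 'a set \<Rightarrow> ('a \<Rightarrow> ennreal) \<Rightarrow> 'a \<Rightarrow> ennreal" where
  "Qop mu \<Omega> F x = (if x \<in> \<Omega> then (\<Sum>z\<in>nbrs mu x. ennreal (trans_prob mu x z) * F z) else 0)"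

definition restr :: "'a set \<Rightarrow> ('a \<Rightarrow> ennreal) \<Rightarrow> 'a \<Rightarrow> ennreal" where
  "restr \<Omega> f = (\<lambda>y. if y \<in> \<Omega> then f y else 0)"

definition GG :: "('a \<Rightarrow> 'a \<Rightarrow> real) \<Rightarrow> 'a set \<Rightarrow> ('a \<Rightarrow> ennreal) \<Rightarrow> 'a \<Rightarrow> ennreal" where
  "GG mu \<Omega> f x = (\<Sum>n. (Qop mu \<Omega> ^^ n) (restr \<Omega> f) x)"

lemma infsum_single_ennreal: "infsum (\<lambda>y. if y = a then c else 0) A = (if a \<in> A then c else (0::ennreal))"
proof -
  have "infsum (\<lambda>y. if y = a then c else 0) A = infsum (\<lambda>y. if y = a then c else 0) (A \<inter> {a})"
    by (rule infsum_cong_neutral) auto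
  also have "\<dots> = (if a \<in> A then c else 0)"
    by (cases "a \<in> A") auto
  finally show ?thesis .
qed

lemma infsum_sum_ennreal:
  fixes f :: "'i \<Rightarrow> 'b \<Rightarrow> ennreal"
  assumes "finite I"
  shows "infsum (\<lambda>y. \<Sum>i\<in>I. f i y) A = (\<Sum>i\<in>I. infsum (f i) A)"
  using assms
proof (induction I rule: finite_induct)
  case empty
  then show ?case by simp
next
  case (insert i I)
  then show ?case by (simp add: infsum_add)
qed

lemma infsum_cmult_ennreal:
  fixes f :: "'b \<Rightarrow> ennreal"
  shows "infsum (\<lambda>y. c * f y) A = c * infsum f A"
  by (simp add: nonneg_infsum_complete SUP_mult_left_ennreal sum_distrib_left)

lemma infsum_suminf_swap:
  fixes a :: "nat \<Rightarrow> 'b \<Rightarrow> ennreal"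
  shows "infsum (\<lambda>y. \<Sum>n. a n y) A = (\<Sum>n. infsum (a n) A)"
proof (rule antisym)
  show "infsum (\<lambda>y. \<Sum>n. a n y) A \<le> (\<Sum>n. infsum (a n) A)"
  proof -
    have e: "infsum (\<lambda>y. \<Sum>n. a n y) A = (SUP F\<in>{F. finite F \<and> F \<subseteq> A}. sum (\<lambda>y. \<Sum>n. a n y) F)"
      by (rule nonneg_infsum_complete) simp
    show ?thesis unfolding e
  proof (rule SUP_least)
    fix F assume F: "F \<in> {F. finite F \<and> F \<subseteq> A}"
    have "(\<Sum>y\<in>F. \<Sum>n. a n y) = (\<Sum>n. \<Sum>y\<in>F. a n y)"
      by (rule suminf_sum[symmetric]) simp
    also have "\<dots> \<le> (\<Sum>n. infsum (a n) A)"
    proof (rule suminf_le)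
      fix n
      have "(\<Sum>y\<in>F. a n y) = infsum (a n) F" using F by simp
      also have "\<dots> \<le> infsum (a n) A"
        by (rule infsum_mono_neutral) (use F in auto)
      finally show "(\<Sum>y\<in>F. a n y) \<le> infsum (a n) A" .
    qed auto
    finally show "(\<Sum>y\<in>F. \<Sum>n. a n y) \<le> (\<Sum>n. infsum (a n) A)" .
  qed
  qed
next
  show "(\<Sum>n. infsum (a n) A) \<le> infsum (\<lambda>y. \<Sum>n. a n y) A"
  proof (rule suminf_le_const)
    fix N
    have "(\<Sum>n<N. infsum (a n) A) = infsum (\<lambda>y. \<Sum>n<N. a n y) A"
      by (rule infsum_sum_ennreal[symmetric]) simp
    also have "\<dots> \<le> infsum (\<lambda>y. \<Sum>n. a n y) A"
      by (rule infsum_mono) (auto intro!: sum_le_suminf)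
    finally show "(\<Sum>n<N. infsum (a n) A) \<le> infsum (\<lambda>y. \<Sum>n. a n y) A" .
  qed simp
qed

context wgraph
begin

abbreviation "Q \<equiv> Qop mu \<Omega>"
abbreviation "G \<equiv> GG mu \<Omega>"

lemma kp_Q: "infsum (\<lambda>y. ennreal (killed_prob mu \<Omega> n x y) * f y) \<Omega> = (Q ^^ n) (restr \<Omega> f) x"
proof (induction n arbitrary: x)
  case 0
  have "infsum (\<lambda>y. ennreal (killed_prob mu \<Omega> 0 x y) * f y) \<Omega>
      = infsum (\<lambda>y. if y = x then (if x \<in> \<Omega> then f x else 0) else 0) \<Omega>"
    by (rule infsum_cong) auto
  also have "\<dots> = restr \<Omega> f x" by (simp add: infsum_single_ennreal restr_def)
  finally show ?case by simp
next
  case (Suc n)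
  show ?case
  proof (cases "x \<in> \<Omega>")
    case True
    have "infsum (\<lambda>y. ennreal (killed_prob mu \<Omega> (Suc n) x y) * f y) \<Omega>
       = infsum (\<lambda>y. \<Sum>z\<in>nbrs mu x. ennreal (trans_prob mu x z) * (ennreal (killed_prob mu \<Omega> n z y) * f y)) \<Omega>"
      using True
      by (intro infsum_cong) (simp add: ennreal_mult tp_nonneg kp_nonneg sum_distrib_right mult.assoc
           killed_prob.simps(2)[of mu \<Omega> n x] flip: sum_ennreal del: killed_prob.simps)
    also have "\<dots> = (\<Sum>z\<in>nbrs mu x. ennreal (trans_prob mu x z) * (Q ^^ n) (restr \<Omega> f) z)"
      by (simp add: infsum_sum_ennreal infsum_cmult_ennreal Suc.IH)
    also have "\<dots> = (Q ^^ Suc n) (restr \<Omega> f) x"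
      using True by (simp add: Qop_def)
    finally show ?thesis .
  next
    case False
    then show ?thesis by (simp add: kp_out1 Qop_def del: killed_prob.simps)
  qed
qed

lemma green_op_GG: "green_op mu \<Omega> f x = G f x"
proof -
  have "green mu \<Omega> x y * f y * ennreal (vmeasure mu y) = (\<Sum>n. ennreal (killed_prob mu \<Omega> n x y) * f y)" for y
  proof -
    have "ennreal (vmeasure mu y) / ennreal (vmeasure mu y) = 1"
      using vpos[of y] by (simp add: divide_ennreal)
    then show ?thesis
      unfolding green_def ennreal_suminf_multc
      by (metis (no_types, lifting) ennreal_divide_times mult.commute mult.left_commute mult_1)
  qed
  then have "green_op mu \<Omega> f x = infsum (\<lambda>y. \<Sum>n. ennreal (killed_prob mu \<Omega> n x y) * f y) \<Omega>"
    unfolding green_op_def by simp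
  also have "\<dots> = (\<Sum>n. infsum (\<lambda>y. ennreal (killed_prob mu \<Omega> n x y) * f y) \<Omega>)"
    by (rule infsum_suminf_swap)
  also have "\<dots> = G f x" by (simp add: kp_Q GG_def)
  finally show ?thesis .
qed


lemma Q_out: "x \<notin> \<Omega> \<Longrightarrow> Q F x = 0" by (simp add: Qop_def)

lemma Q_mono: "(\<And>z. F z \<le> F' z) \<Longrightarrow> Q F x \<le> Q F' x"
  by (auto simp: Qop_def intro!: sum_mono mult_left_mono)

lemma Q_cmult: "Q (\<lambda>z. c * F z) x = c * Q F x"
  by (simp add: Qop_def sum_distrib_left mult.left_commute)

lemma Q_sum: "finite I \<Longrightarrow> Q (\<lambda>z. \<Sum>i\<in>I. a i z) x = (\<Sum>i\<in>I. Q (a i) x)"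
  by (simp add: Qop_def sum_distrib_left sum.swap[of _ I])

lemma Q_suminf: "Q (\<lambda>z. \<Sum>n. a n z) x = (\<Sum>n. Q (a n) x)"
proof (cases "x \<in> \<Omega>")
  case True
  have "Q (\<lambda>z. \<Sum>n. a n z) x = (\<Sum>z\<in>nbrs mu x. \<Sum>n. ennreal (trans_prob mu x z) * a n z)"
    using True by (simp add: Qop_def)
  also have "\<dots> = (\<Sum>n. \<Sum>z\<in>nbrs mu x. ennreal (trans_prob mu x z) * a n z)"
    by (rule suminf_sum[symmetric]) simp
  also have "\<dots> = (\<Sum>n. Q (a n) x)" using True by (simp add: Qop_def)
  finally show ?thesis .
qed (simp add: Qop_def)

lemma Qpow_out: "x \<notin> \<Omega> \<Longrightarrow> (Q ^^ n) (restr \<Omega> f) x = 0"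
  by (cases n) (auto simp: restr_def Q_out)

lemma GG_out: "x \<notin> \<Omega> \<Longrightarrow> G f x = 0"
  by (simp add: GG_def Qpow_out)

lemma GG_eq: "x \<in> \<Omega> \<Longrightarrow> G f x = f x + Q (G f) x"
proof -
  assume x: "x \<in> \<Omega>"
  have "G f x = (\<Sum>n. (Q ^^ (n + 1)) (restr \<Omega> f) x) + (\<Sum>i<1. (Q ^^ i) (restr \<Omega> f) x)"
    unfolding GG_def by (rule suminf_offset[of "\<lambda>n. (Q ^^ n) (restr \<Omega> f) x" 1]) simp
  also have "(\<Sum>i<1. (Q ^^ i) (restr \<Omega> f) x) = f x" using x by (simp add: restr_def)
  also have "(\<Sum>n. (Q ^^ (n + 1)) (restr \<Omega> f) x) = (\<Sum>n. Q ((Q ^^ n) (restr \<Omega> f)) x)"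
    by simp
  also have "\<dots> = Q (G f) x" unfolding GG_def by (rule Q_suminf[symmetric])
  finally show ?thesis by (simp add: add.commute)
qed

lemma GG_min:
  assumes "\<And>x. x \<in> \<Omega> \<Longrightarrow> f x + Q F x \<le> F x" and x: "x \<in> \<Omega>"
  shows "G f x \<le> F x"
proof -
  have *: "\<forall>x\<in>\<Omega>. (\<Sum>n<N. (Q ^^ n) (restr \<Omega> f) x) \<le> F x" for N
  proof (induction N)
    case 0
    then show ?case by simp
  next
    case (Suc N)
    show ?case
    proof
      fix x assume x: "x \<in> \<Omega>"
      have "(\<Sum>n<Suc N. (Q ^^ n) (restr \<Omega> f) x) = f x + (\<Sum>n<N. Q ((Q ^^ n) (restr \<Omega> f)) x)"
        using x by (simp add: sum.lessThan_Suc_shift restr_def del: sum.lessThan_Suc)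
      also have "\<dots> = f x + Q (\<lambda>z. \<Sum>n<N. (Q ^^ n) (restr \<Omega> f) z) x"
        by (simp add: Q_sum)
      also have "\<dots> \<le> f x + Q F x"
      proof (intro add_left_mono Q_mono)
        fix z show "(\<Sum>n<N. (Q ^^ n) (restr \<Omega> f) z) \<le> F z"
          using Suc.IH by (cases "z \<in> \<Omega>") (auto simp: Qpow_out)
      qed
      also have "\<dots> \<le> F x" using assms(1) x by blast
      finally show "(\<Sum>n<Suc N. (Q ^^ n) (restr \<Omega> f) x) \<le> F x" .
    qed
  qed
  show ?thesis unfolding GG_def
    by (rule suminf_le_const) (use * x in auto)
qed

lemma Qpow_mono: "(\<And>y. y \<in> \<Omega> \<Longrightarrow> f y \<le> f' y) \<Longrightarrow> (Q ^^ n) (restr \<Omega> f) x \<le> (Q ^^ n) (restr \<Omega> f') x"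
proof (induction n arbitrary: x)
  case 0
  then show ?case by (simp add: restr_def)
next
  case (Suc n)
  then show ?case by (simp add: Q_mono)
qed

lemma GG_mono: "(\<And>y. y \<in> \<Omega> \<Longrightarrow> f y \<le> f' y) \<Longrightarrow> G f x \<le> G f' x"
  unfolding GG_def by (rule suminf_le) (auto intro: Qpow_mono)

lemma Qpow_cmult: "(Q ^^ n) (restr \<Omega> (\<lambda>y. c * f y)) x = c * (Q ^^ n) (restr \<Omega> f) x"
proof (induction n arbitrary: x)
  case 0
  then show ?case by (simp add: restr_def)
next
  case (Suc n)
  have "(Q ^^ n) (restr \<Omega> (\<lambda>y. c * f y)) = (\<lambda>z. c * (Q ^^ n) (restr \<Omega> f) z)"
    using Suc.IH by (simp add: fun_eq_iff)
  then have "(Q ^^ Suc n) (restr \<Omega> (\<lambda>y. c * f y)) x = Q (\<lambda>z. c * (Q ^^ n) (restr \<Omega> f) z) x"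
    by simp
  also have "\<dots> = c * (Q ^^ Suc n) (restr \<Omega> f) x" by (simp add: Q_cmult)
  finally show ?case .
qed

lemma GG_cmult: "G (\<lambda>y. c * f y) x = c * G f x"
  by (simp add: GG_def Qpow_cmult)

lemma GG_cong: "(\<And>y. y \<in> \<Omega> \<Longrightarrow> f y = f' y) \<Longrightarrow> G f x = G f' x"
proof -
  assume "\<And>y. y \<in> \<Omega> \<Longrightarrow> f y = f' y"
  then have "restr \<Omega> f = restr \<Omega> f'" by (auto simp: restr_def)
  then show ?thesis by (simp add: GG_def)
qed

definition "edelta p = (\<lambda>y. if y = p then ennreal (1 / vmeasure mu p) else 0)"

lemma GG_edelta: "p \<in> \<Omega> \<Longrightarrow> G (edelta p) x = green mu \<Omega> p x"
proof -
  assume p: "p \<in> \<Omega>"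
  have "G (edelta p) x = green_op mu \<Omega> (edelta p) x" by (simp add: green_op_GG)
  also have "\<dots> = infsum (\<lambda>y. if y = p then green mu \<Omega> x p else 0) \<Omega>"
  proof -
    have "ennreal (1 / vmeasure mu p) * ennreal (vmeasure mu p) = 1"
      using vpos[of p] by (simp flip: ennreal_mult)
    then show ?thesis unfolding green_op_def edelta_def
      by (intro infsum_cong) (auto simp: mult.assoc)
  qed
  also have "\<dots> = green mu \<Omega> p x" using p by (simp add: infsum_single_ennreal green_sym)
  finally show ?thesis .
qed

lemma GG_lower:
  assumes p: "p \<in> \<Omega>"
  shows "(f p * ennreal (vmeasure mu p)) * green mu \<Omega> p x \<le> G f x"
proof -
  have "(f p * ennreal (vmeasure mu p)) * green mu \<Omega> p x = G (\<lambda>y. (f p * ennreal (vmeasure mu p)) * edelta p y) x"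
    using p by (simp add: GG_cmult GG_edelta)
  also have "\<dots> \<le> G f x"
  proof (rule GG_mono)
    fix y
    have "ennreal (vmeasure mu p) * ennreal (1 / vmeasure mu p) = 1"
      using vpos[of p] by (simp flip: ennreal_mult)
    then show "f p * ennreal (vmeasure mu p) * edelta p y \<le> f y"
      by (auto simp: edelta_def mult.assoc)
  qed
  finally show ?thesis .
qed


lemma lap: "laplacian mu u x = (\<Sum>z\<in>nbrs mu x. trans_prob mu x z * u z) - u x"
proof -
  have "laplacian mu u x = (\<Sum>z\<in>nbrs mu x. trans_prob mu x z * u z) - (\<Sum>z\<in>nbrs mu x. trans_prob mu x z) * u x"
    unfolding laplacian_def trans_prob_def
    by (simp add: sum_distrib_left sum_distrib_right right_diff_distrib sum_subtractf sum_divide_distrib)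
  then show ?thesis by (simp add: tp_sum)
qed

lemma Q_real: "(\<And>z. 0 \<le> u z) \<Longrightarrow> x \<in> \<Omega> \<Longrightarrow> Q (\<lambda>z. ennreal (u z)) x = ennreal (\<Sum>z\<in>nbrs mu x. trans_prob mu x z * u z)"
  by (simp add: Qop_def ennreal_mult tp_nonneg mult_nonneg_nonneg flip: sum_ennreal)

lemma I_to_II:
  assumes upos: "\<forall>x\<in>\<Omega>. 0 < u x" and uout: "\<forall>x. x \<notin> \<Omega> \<longrightarrow> u x = 0"
    and ulap: "\<forall>x\<in>\<Omega>. - laplacian mu u x \<ge> \<sigma> x * u x powr q"
    and sig: "\<forall>x\<in>\<Omega>. 0 \<le> \<sigma> x"
    and x: "x \<in> \<Omega>"
  shows "G (\<lambda>y. ennreal (\<sigma> y * u y powr q)) x \<le> ennreal (u x)"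
proof (rule GG_min[OF _ x])
  have un: "0 \<le> u z" for z using upos uout by (cases "z \<in> \<Omega>") (auto simp: less_imp_le)
  fix x assume x: "x \<in> \<Omega>"
  have "ennreal (\<sigma> x * u x powr q) + Q (\<lambda>z. ennreal (u z)) x
      = ennreal (\<sigma> x * u x powr q + (\<Sum>z\<in>nbrs mu x. trans_prob mu x z * u z))"
    using x sig un by (simp add: Q_real ennreal_plus sum_nonneg mult_nonneg_nonneg tp_nonneg)
  also have "\<dots> \<le> ennreal (u x)"
    using ulap x by (intro ennreal_leI) (force simp add: lap)
  finally show "ennreal (\<sigma> x * u x powr q) + Q (\<lambda>z. ennreal (u z)) x \<le> ennreal (u x)" .
qed

lemma II_to_I:
  assumes conn: "connected_subset mu \<Omega>"
    and upos: "\<forall>x\<in>\<Omega>. 0 < u x"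
    and uG: "\<forall>x\<in>\<Omega>. G (\<lambda>y. ennreal (\<sigma> y * u y powr q)) x \<le> ennreal (u x)"
    and sig: "\<forall>x\<in>\<Omega>. 0 \<le> \<sigma> x" and p: "p \<in> \<Omega>" "0 < \<sigma> p" and q: "0 < q"
  shows "\<exists>w. (\<forall>x\<in>\<Omega>. 0 < w x) \<and> (\<forall>x. x \<notin> \<Omega> \<longrightarrow> w x = 0) \<and>
         (\<forall>x\<in>\<Omega>. - laplacian mu w x \<ge> \<sigma> x * w x powr q)"
proof -
  define f where "f = (\<lambda>y. ennreal (\<sigma> y * u y powr q))"
  define w where "w = (\<lambda>x. enn2real (G f x))"
  have Gfin: "G f z < top" for z
  proof (cases "z \<in> \<Omega>")
    case True
    then have "G f z \<le> ennreal (u z)" using uG by (simp add: f_def)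
    then show ?thesis using ennreal_less_top le_less_trans by blast
  qed (simp add: GG_out)
  have Gw: "G f = (\<lambda>z. ennreal (w z))" using Gfin by (simp add: w_def fun_eq_iff)
  have wn: "0 \<le> w z" for z by (simp add: w_def)
  have wout: "\<forall>x. x \<notin> \<Omega> \<longrightarrow> w x = 0" by (simp add: w_def GG_out)
  have weq: "w x = \<sigma> x * u x powr q + (\<Sum>z\<in>nbrs mu x. trans_prob mu x z * w z)" if x: "x \<in> \<Omega>" for x
  proof -
    have "ennreal (w x) = f x + Q (G f) x" using GG_eq[OF x, of f] by (simp add: Gw)
    also have "Q (G f) x = ennreal (\<Sum>z\<in>nbrs mu x. trans_prob mu x z * w z)"
      unfolding Gw using x wn by (simp add: Q_real)
    also have "f x + ennreal (\<Sum>z\<in>nbrs mu x. trans_prob mu x z * w z) = ennreal (\<sigma> x * u x powr q + (\<Sum>z\<in>nbrs mu x. trans_prob mu x z * w z))"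
      unfolding f_def using x sig wn
      by (simp add: ennreal_plus sum_nonneg mult_nonneg_nonneg tp_nonneg)
    finally show ?thesis using x sig wn
      by (subst (asm) ennreal_inj) (auto intro!: add_nonneg_nonneg sum_nonneg mult_nonneg_nonneg tp_nonneg)
  qed
  have wpos: "0 < w x" if x: "x \<in> \<Omega>" for x
  proof -
    have up: "0 < u p" using upos p by blast
    then have "0 < \<sigma> p * u p powr q" using p(2) by simp
    then have "0 < (f p * ennreal (vmeasure mu p)) * green mu \<Omega> p x"
      using p upos vpos[of p] green_pos[OF conn p(1) x] by (simp add: f_def ennreal_zero_less_mult_iff mult_pos_pos)
    also have "\<dots> \<le> G f x" by (rule GG_lower[OF p(1)])
    finally show ?thesis using Gw by simp
  qed
  have wle: "w x \<le> u x" if x: "x \<in> \<Omega>" for x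
    using uG x Gw upos by (simp add: f_def fun_eq_iff less_imp_le)
  show ?thesis
  proof (intro exI[of _ w] conjI ballI)
    fix x assume x: "x \<in> \<Omega>"
    show "0 < w x" using wpos x .
    have "\<sigma> x * w x powr q \<le> \<sigma> x * u x powr q"
      using sig x wle wn q by (intro mult_left_mono powr_mono2) auto
    also have "\<dots> = - laplacian mu w x" using weq[OF x] by (simp add: lap)
    finally show "\<sigma> x * w x powr q \<le> - laplacian mu w x" .
  qed (use wout in auto)
qed


lemma I_to_III:
  assumes conn: "connected_subset mu \<Omega>"
    and upos: "\<forall>x\<in>\<Omega>. 0 < u x" and uout: "\<forall>x. x \<notin> \<Omega> \<longrightarrow> u x = 0"
    and ulap: "\<forall>x\<in>\<Omega>. - laplacian mu u x \<ge> \<sigma> x * u x powr q"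
    and sig: "\<forall>x\<in>\<Omega>. 0 \<le> \<sigma> x"
    and p: "p \<in> \<Omega>" "0 < \<sigma> p" and q: "1 < q"
  shows "\<exists>C::real. 0 < C \<and> (\<forall>x\<in>\<Omega>.
         green_op mu \<Omega> (\<lambda>y. ennreal (\<sigma> y) * epowr (green mu \<Omega> p y) q) x
           \<le> ennreal C * green mu \<Omega> p x \<and> green mu \<Omega> p x < \<infinity>)"
proof -
  define f where "f = (\<lambda>y. ennreal (\<sigma> y * u y powr q))"
  have un: "0 \<le> u z" for z using upos uout by (cases "z \<in> \<Omega>") (auto simp: less_imp_le)
  have uG: "G f x \<le> ennreal (u x)" if "x \<in> \<Omega>" for x
    unfolding f_def by (rule I_to_II[OF upos uout ulap sig that])
  define a where "a = \<sigma> p * u p powr q * vmeasure mu p"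
  have up: "0 < u p" using upos p by blast
  have a: "0 < a" using up p vpos[of p] by (simp add: a_def)
  have ag: "ennreal a * green mu \<Omega> p x \<le> ennreal (u x)" for x
  proof (cases "x \<in> \<Omega>")
    case True
    have "f p * ennreal (vmeasure mu p) = ennreal a"
      using p up vpos[of p] by (simp add: f_def a_def ennreal_mult)
    then show ?thesis using GG_lower[OF p(1), of f x] uG[OF True] by simp
  next
    case False
    then show ?thesis by (simp add: green_out)
  qed
  have gfin: "green mu \<Omega> p x < top" for x
  proof -
    have "ennreal a * green mu \<Omega> p x < top" using ag[of x] by (meson ennreal_less_top le_less_trans)
    then show ?thesis using a by (auto simp: ennreal_mult_less_top)
  qed
  define h where "h = (\<lambda>x. enn2real (green mu \<Omega> p x))"
  have gh: "green mu \<Omega> p x = ennreal (h x)" for x using gfin[of x] by (simp add: h_def)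
  have hn: "0 \<le> h x" for x by (simp add: h_def)
  have hpos: "0 < h x" if "x \<in> \<Omega>" for x
    using green_pos[OF conn p(1) that] gh[of x] by simp
  have hout: "h x = 0" if "x \<notin> \<Omega>" for x using that by (simp add: h_def green_out)
  have ah: "a * h x \<le> u x" for x
    using ag[of x] a hn[of x] un[of x] by (simp add: gh ennreal_mult[symmetric])
  have Qh: "(\<Sum>z\<in>nbrs mu x. trans_prob mu x z * h z) \<le> h x" if x: "x \<in> \<Omega>" for x
  proof -
    have Ge: "G (edelta p) = (\<lambda>z. ennreal (h z))" using p by (simp add: fun_eq_iff GG_edelta gh)
    have "ennreal (\<Sum>z\<in>nbrs mu x. trans_prob mu x z * h z) = Q (G (edelta p)) x"
      using x hn by (simp add: Ge Q_real)
    also have "\<dots> \<le> edelta p x + Q (G (edelta p)) x" by simp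
    also have "\<dots> = ennreal (h x)" using GG_eq[OF x, of "edelta p"] Ge by simp
    finally show ?thesis using hn[of x] by simp
  qed
  have Qu: "(\<Sum>z\<in>nbrs mu x. trans_prob mu x z * u z) \<le> u x - \<sigma> x * u x powr q" if x: "x \<in> \<Omega>" for x
    using ulap x by (force simp: lap)
  define K where "K = a powr (1 - q) * q / (q - 1)"
  have K: "0 < K" using a q by (simp add: K_def)
  define \<phi> where "\<phi> = (\<lambda>t::real. K - t powr (1 - q) / (q - 1))"
  define v where "v = (\<lambda>x. u x / h x)"
  define H where "H = (\<lambda>x. if x \<in> \<Omega> then h x * \<phi> (v x) else 0)"
  have va: "a \<le> v x" if "x \<in> \<Omega>" for x
    using ah[of x] hpos[OF that] by (simp add: v_def pos_le_divide_eq)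
  have vp: "0 < v x" if "x \<in> \<Omega>" for x using va[OF that] a by linarith
  have philow: "v x powr (1 - q) \<le> \<phi> (v x)" if "x \<in> \<Omega>" for x
    using phi_lower[OF q a va[OF that]] by (simp add: \<phi>_def K_def)
  have phiup: "\<phi> t \<le> K" for t using q by (simp add: \<phi>_def)
  have Hn: "0 \<le> H x" for x
  proof (cases "x \<in> \<Omega>")
    case True
    have "0 \<le> v x powr (1 - q)" by simp
    then have "0 \<le> \<phi> (v x)" using philow[OF True] by linarith
    then show ?thesis using True hn[of x] by (simp add: H_def)
  qed (simp add: H_def)
  have Hle: "H x \<le> K * h x" for x
  proof (cases "x \<in> \<Omega>")
    case True
    have "h x * \<phi> (v x) \<le> h x * K" using phiup[of "v x"] hn[of x] by (rule mult_left_mono)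
    then show ?thesis using True by (simp add: H_def mult.commute)
  qed (simp add: H_def hout)
  have key: "\<sigma> x * h x powr q + (\<Sum>z\<in>nbrs mu x. trans_prob mu x z * H z) \<le> H x" if x: "x \<in> \<Omega>" for x
  proof -
    define vx where "vx = v x"
    define d where "d = vx powr (- q)"
    have vx: "0 < vx" using vp[OF x] by (simp add: vx_def)
    have d: "0 \<le> d" by (simp add: d_def)
    have dvx: "d * vx = vx powr (1 - q)"
      using vx by (simp add: d_def powr_add[symmetric] mult.commute[of _ vx] powr_mult_base)
    have trm: "H z \<le> h z * \<phi> vx + d * (u z - vx * h z)" for z
    proof (cases "z \<in> \<Omega>")
      case True
      have "h z * (K - (u z / h z) powr (1 - q) / (q - 1))
           \<le> h z * (K - vx powr (1 - q) / (q - 1)) + vx powr (- q) * (u z - vx * h z)"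
        by (rule tangent_term[OF q hpos[OF True] vx]) (use upos True in auto)
      then show ?thesis using True by (simp add: H_def \<phi>_def v_def d_def)
    next
      case False
      then show ?thesis by (simp add: H_def hout uout)
    qed
    let ?N = "nbrs mu x"
    have "(\<Sum>z\<in>?N. trans_prob mu x z * H z) \<le> (\<Sum>z\<in>?N. trans_prob mu x z * (h z * \<phi> vx + d * (u z - vx * h z)))"
      by (intro sum_mono mult_left_mono trm tp_nonneg)
    also have "\<dots> = (\<phi> vx - d * vx) * (\<Sum>z\<in>?N. trans_prob mu x z * h z) + d * (\<Sum>z\<in>?N. trans_prob mu x z * u z)"
      by (simp add: sum_distrib_left ring_distribs sum.distrib sum_subtractf algebra_simps)
    also have "\<dots> \<le> (\<phi> vx - d * vx) * h x + d * (u x - \<sigma> x * u x powr q)"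
    proof (intro add_mono mult_left_mono Qh Qu x d)
      show "0 \<le> \<phi> vx - d * vx" using philow[OF x] dvx by (simp add: vx_def)
    qed
    also have "\<dots> = h x * \<phi> vx - d * (vx * h x) + d * u x - \<sigma> x * (d * u x powr q)"
      by (simp add: algebra_simps)
    also have "vx * h x = u x" using hpos[OF x] by (simp add: vx_def v_def)
    also have "d * u x powr q = h x powr q"
      using powr_ratio[OF hpos[OF x], of "u x" q] upos x by (simp add: d_def vx_def v_def)
    finally show ?thesis using x by (simp add: H_def vx_def)
  qed
  define f' where "f' = (\<lambda>y. ennreal (\<sigma> y * h y powr q))"
  have Gf': "G f' x \<le> ennreal (H x)" if x: "x \<in> \<Omega>" for x
  proof (rule GG_min[OF _ x])
    fix x assume x: "x \<in> \<Omega>"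
    have "f' x + Q (\<lambda>z. ennreal (H z)) x = ennreal (\<sigma> x * h x powr q + (\<Sum>z\<in>nbrs mu x. trans_prob mu x z * H z))"
      using x sig Hn by (simp add: f'_def Q_real ennreal_plus sum_nonneg mult_nonneg_nonneg tp_nonneg)
    also have "\<dots> \<le> ennreal (H x)" using key[OF x] by (rule ennreal_leI)
    finally show "f' x + Q (\<lambda>z. ennreal (H z)) x \<le> ennreal (H x)" .
  qed
  show ?thesis
  proof (intro exI[of _ K] conjI K ballI)
    fix x assume x: "x \<in> \<Omega>"
    show "green mu \<Omega> p x < \<infinity>" using gfin[of x] by simp
    have "green_op mu \<Omega> (\<lambda>y. ennreal (\<sigma> y) * epowr (green mu \<Omega> p y) q) x
        = G (\<lambda>y. ennreal (\<sigma> y) * epowr (green mu \<Omega> p y) q) x" by (rule green_op_GG)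
    also have "\<dots> = G f' x"
    proof (rule GG_cong)
      fix y assume y: "y \<in> \<Omega>"
      have "epowr (green mu \<Omega> p y) q = ennreal (h y powr q)"
        using gfin[of y] hn[of y] by (simp add: epowr_def gh)
      then show "ennreal (\<sigma> y) * epowr (green mu \<Omega> p y) q = f' y"
        using sig y by (simp add: f'_def ennreal_mult)
    qed
    also have "\<dots> \<le> ennreal (H x)" by (rule Gf'[OF x])
    also have "\<dots> \<le> ennreal (K * h x)" using Hle[of x] by (rule ennreal_leI)
    also have "\<dots> = ennreal K * green mu \<Omega> p x" using less_imp_le[OF K] by (simp add: gh ennreal_mult')
    finally show "green_op mu \<Omega> (\<lambda>y. ennreal (\<sigma> y) * epowr (green mu \<Omega> p y) q) x \<le> ennreal K * green mu \<Omega> p x" .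
  qed
qed


lemma III_to_II:
  assumes conn: "connected_subset mu \<Omega>"
    and sig: "\<forall>x\<in>\<Omega>. 0 \<le> \<sigma> x"
    and p: "p \<in> \<Omega>" and q: "1 < q" and C: "0 < C"
    and hyp: "\<forall>x\<in>\<Omega>. green_op mu \<Omega> (\<lambda>y. ennreal (\<sigma> y) * epowr (green mu \<Omega> p y) q) x
           \<le> ennreal C * green mu \<Omega> p x \<and> green mu \<Omega> p x < \<infinity>"
  shows "\<exists>u::'a \<Rightarrow> real. (\<forall>x\<in>\<Omega>. 0 < u x) \<and>
         (\<forall>x\<in>\<Omega>. ennreal (u x) \<ge> green_op mu \<Omega> (\<lambda>y. ennreal (\<sigma> y * u y powr q)) x)"
proof -
  define h where "h = (\<lambda>x. enn2real (green mu \<Omega> p x))"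
  have gh: "green mu \<Omega> p x = ennreal (h x)" if "x \<in> \<Omega>" for x
    using hyp that by (simp add: h_def)
  have hn: "0 \<le> h x" for x by (simp add: h_def)
  have hpos: "0 < h x" if "x \<in> \<Omega>" for x
    using green_pos[OF conn p that] gh[OF that] by simp
  define l where "l = (1 / C) powr (1 / (q - 1))"
  have l: "0 < l" using C by (simp add: l_def)
  have lq: "l powr q * C = l"
  proof -
    have "l powr q = l powr (1 + (q - 1))" by simp
    also have "\<dots> = l powr 1 * l powr (q - 1)" by (rule powr_add)
    also have "l powr 1 = l" using l by simp
    also have "l powr (q - 1) = 1 / C"
      using C q by (simp add: l_def powr_powr)
    finally show ?thesis using l C by simp
  qed
  define u where "u = (\<lambda>x. l * h x)"
  show ?thesis
  proof (intro exI[of _ u] conjI ballI)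
    fix x assume x: "x \<in> \<Omega>"
    show "0 < u x" using l hpos[OF x] by (simp add: u_def)
    have "green_op mu \<Omega> (\<lambda>y. ennreal (\<sigma> y * u y powr q)) x = G (\<lambda>y. ennreal (\<sigma> y * u y powr q)) x"
      by (rule green_op_GG)
    also have "\<dots> = G (\<lambda>y. ennreal (l powr q) * (ennreal (\<sigma> y) * epowr (green mu \<Omega> p y) q)) x"
    proof (rule GG_cong)
      fix y assume y: "y \<in> \<Omega>"
      have "epowr (green mu \<Omega> p y) q = ennreal (h y powr q)"
        using gh[OF y] hn[of y] by (simp add: epowr_def)
      moreover have "u y powr q = l powr q * h y powr q"
        using l hn[of y] by (simp add: u_def powr_mult)
      ultimately show "ennreal (\<sigma> y * u y powr q) = ennreal (l powr q) * (ennreal (\<sigma> y) * epowr (green mu \<Omega> p y) q)"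
        using sig y by (simp add: ennreal_mult mult_ac)
    qed
    also have "\<dots> = ennreal (l powr q) * green_op mu \<Omega> (\<lambda>y. ennreal (\<sigma> y) * epowr (green mu \<Omega> p y) q) x"
      by (simp add: GG_cmult green_op_GG)
    also have "\<dots> \<le> ennreal (l powr q) * (ennreal C * green mu \<Omega> p x)"
      using hyp x by (intro mult_left_mono) auto
    also have "\<dots> = ennreal (l powr q * C * h x)"
      using C hn[of x] gh[OF x] by (simp add: ennreal_mult mult.assoc)
    also have "\<dots> = ennreal (u x)" by (simp add: lq u_def)
    finally show "green_op mu \<Omega> (\<lambda>y. ennreal (\<sigma> y * u y powr q)) x \<le> ennreal (u x)" .
  qed
qed

end

lemma vmeasure_pos:
  fixes mu :: "'a \<Rightarrow> 'a \<Rightarrow> real"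
  assumes inf: "infinite (UNIV :: 'a set)" and wg: "weighted_graph mu"
    and lf: "locally_finite mu" and conn: "graph_connected mu"
  shows "vmeasure mu x > 0"
proof -
  obtain y where y: "y \<noteq> x" using inf by (metis finite_insert finite_subset infinite_UNIV_char_0 subset_UNIV UNIV_eq_I insertI1 insert_iff ex_new_if_finite finite.emptyI)
  have "(x, y) \<in> {(a, b). mu a b > 0}\<^sup>*" using conn by (simp add: graph_connected_def)
  then obtain z where z: "mu x z > 0" using y by (cases rule: converse_rtranclE) auto
  have zn: "z \<in> nbrs mu x" using z by (simp add: nbrs_def)
  have "0 < mu x z" by (rule z)
  also have "\<dots> \<le> (\<Sum>w\<in>nbrs mu x. mu x w)"
    using lf zn by (intro member_le_sum) (auto simp: locally_finite_def nbrs_def)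
  finally show ?thesis by (simp add: vmeasure_def)
qed

theorem theorem1p1:
  fixes mu :: "'a::countable \<Rightarrow> 'a \<Rightarrow> real"
    and \<Omega> :: "'a set" and \<sigma> :: "'a \<Rightarrow> real" and q :: real
  assumes inf: "infinite (UNIV :: 'a set)"
    and wg: "weighted_graph mu"
    and lf: "locally_finite mu"
    and conn: "graph_connected mu"
    and conn\<Omega>: "connected_subset mu \<Omega>"
    and np: "\<Omega> \<noteq> UNIV \<or> \<not> parabolic mu"
    and \<sigma>_nonneg: "\<forall>x\<in>\<Omega>. 0 \<le> \<sigma> x"
    and \<sigma>_nonzero: "\<exists>x\<in>\<Omega>. \<sigma> x \<noteq> 0"
    and q: "1 < q"
  shows
    "((\<exists>u::'a \<Rightarrow> real. (\<forall>x\<in>\<Omega>. 0 < u x) \<and> (\<forall>x. x \<notin> \<Omega> \<longrightarrow> u x = 0) \<and>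
         (\<forall>x\<in>\<Omega>. - laplacian mu u x \<ge> \<sigma> x * u x powr q))
      \<longleftrightarrow>
      (\<exists>u::'a \<Rightarrow> real. (\<forall>x\<in>\<Omega>. 0 < u x) \<and>
         (\<forall>x\<in>\<Omega>. ennreal (u x) \<ge> green_op mu \<Omega> (\<lambda>y. ennreal (\<sigma> y * u y powr q)) x)))
   \<and> ((\<exists>u::'a \<Rightarrow> real. (\<forall>x\<in>\<Omega>. 0 < u x) \<and>
         (\<forall>x\<in>\<Omega>. ennreal (u x) \<ge> green_op mu \<Omega> (\<lambda>y. ennreal (\<sigma> y * u y powr q)) x))
      \<longleftrightarrow>
      (\<exists>x0\<in>\<Omega>. 0 < \<sigma> x0 \<and> (\<exists>C::real. 0 < C \<and> (\<forall>x\<in>\<Omega>.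
         green_op mu \<Omega> (\<lambda>y. ennreal (\<sigma> y) * epowr (green mu \<Omega> x0 y) q) x
           \<le> ennreal C * green mu \<Omega> x0 x \<and> green mu \<Omega> x0 x < \<infinity>))))
   \<and> ((\<exists>x0\<in>\<Omega>. 0 < \<sigma> x0 \<and> (\<exists>C::real. 0 < C \<and> (\<forall>x\<in>\<Omega>.
         green_op mu \<Omega> (\<lambda>y. ennreal (\<sigma> y) * epowr (green mu \<Omega> x0 y) q) x
           \<le> ennreal C * green mu \<Omega> x0 x \<and> green mu \<Omega> x0 x < \<infinity>)))
      \<longleftrightarrow>
      (\<forall>x0\<in>\<Omega>. 0 < \<sigma> x0 \<longrightarrow> (\<exists>C::real. 0 < C \<and> (\<forall>x\<in>\<Omega>.
         green_op mu \<Omega> (\<lambda>y. ennreal (\<sigma> y) * epowr (green mu \<Omega> x0 y) q) x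
           \<le> ennreal C * green mu \<Omega> x0 x \<and> green mu \<Omega> x0 x < \<infinity>))))"
proof -
  have vpos: "\<And>x. vmeasure mu x > 0" using vmeasure_pos[OF inf wg lf conn] by blast
  interpret wgraph mu \<Omega> using wg lf vpos by unfold_locales
  obtain p where p: "p \<in> \<Omega>" "0 < \<sigma> p"
    using \<sigma>_nonzero \<sigma>_nonneg by (metis less_eq_real_def)
  let ?I = "\<exists>u::'a \<Rightarrow> real. (\<forall>x\<in>\<Omega>. 0 < u x) \<and> (\<forall>x. x \<notin> \<Omega> \<longrightarrow> u x = 0) \<and>
         (\<forall>x\<in>\<Omega>. - laplacian mu u x \<ge> \<sigma> x * u x powr q)"
  let ?II = "\<exists>u::'a \<Rightarrow> real. (\<forall>x\<in>\<Omega>. 0 < u x) \<and>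
         (\<forall>x\<in>\<Omega>. ennreal (u x) \<ge> green_op mu \<Omega> (\<lambda>y. ennreal (\<sigma> y * u y powr q)) x)"
  let ?P = "\<lambda>x0. \<exists>C::real. 0 < C \<and> (\<forall>x\<in>\<Omega>.
         green_op mu \<Omega> (\<lambda>y. ennreal (\<sigma> y) * epowr (green mu \<Omega> x0 y) q) x
           \<le> ennreal C * green mu \<Omega> x0 x \<and> green mu \<Omega> x0 x < \<infinity>)"
  have I_II: "?I \<Longrightarrow> ?II"
  proof -
    assume ?I
    then obtain u where u: "\<forall>x\<in>\<Omega>. 0 < u x" "\<forall>x. x \<notin> \<Omega> \<longrightarrow> u x = 0"
      "\<forall>x\<in>\<Omega>. - laplacian mu u x \<ge> \<sigma> x * u x powr q" by blast
    show ?II using I_to_II[OF u \<sigma>_nonneg] u(1) by (auto simp: green_op_GG)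
  qed
  have II_I: "?II \<Longrightarrow> ?I"
  proof -
    assume ?II
    then obtain u where u: "\<forall>x\<in>\<Omega>. 0 < u x"
      "\<forall>x\<in>\<Omega>. ennreal (u x) \<ge> green_op mu \<Omega> (\<lambda>y. ennreal (\<sigma> y * u y powr q)) x" by blast
    show ?I using II_to_I[OF conn\<Omega> u(1) _ \<sigma>_nonneg p] u(2) q by (simp add: green_op_GG)
  qed
  have I_IIIa: "?I \<Longrightarrow> \<forall>x0\<in>\<Omega>. 0 < \<sigma> x0 \<longrightarrow> ?P x0"
  proof (intro ballI impI)
    fix x0 assume "?I" "x0 \<in> \<Omega>" "0 < \<sigma> x0"
    then obtain u where u: "\<forall>x\<in>\<Omega>. 0 < u x" "\<forall>x. x \<notin> \<Omega> \<longrightarrow> u x = 0"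
      "\<forall>x\<in>\<Omega>. - laplacian mu u x \<ge> \<sigma> x * u x powr q" by blast
    show "?P x0" by (rule I_to_III[OF conn\<Omega> u \<sigma>_nonneg \<open>x0 \<in> \<Omega>\<close> \<open>0 < \<sigma> x0\<close> q])
  qed
  have IIIa_IIIs: "(\<forall>x0\<in>\<Omega>. 0 < \<sigma> x0 \<longrightarrow> ?P x0) \<Longrightarrow> (\<exists>x0\<in>\<Omega>. 0 < \<sigma> x0 \<and> ?P x0)"
    using p by blast
  have IIIs_II: "(\<exists>x0\<in>\<Omega>. 0 < \<sigma> x0 \<and> ?P x0) \<Longrightarrow> ?II"
  proof -
    assume "\<exists>x0\<in>\<Omega>. 0 < \<sigma> x0 \<and> ?P x0"
    then obtain x0 C where x0: "x0 \<in> \<Omega>" and C: "0 < C" and hyp: "\<forall>x\<in>\<Omega>.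
         green_op mu \<Omega> (\<lambda>y. ennreal (\<sigma> y) * epowr (green mu \<Omega> x0 y) q) x
           \<le> ennreal C * green mu \<Omega> x0 x \<and> green mu \<Omega> x0 x < \<infinity>" by blast
    show ?II by (rule III_to_II[OF conn\<Omega> \<sigma>_nonneg x0 q C hyp])
  qed
  show ?thesis using I_II II_I I_IIIa IIIa_IIIs IIIs_II by blast
qed

end
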